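(* Let $\beta>1$ and $n\ge1$. Let $e_k$ denote the edge between $1_{k-1}$ and $1_k$ (with $1_0=\varnothing$), for $k=1,\dots,n$. For $E\subset\{e_1,\dots,e_n\}$ let $a(E)=\mathbb{P}(\sum_{e\in E}V_e^{-1}\le t)$, where $t>0$ is fixed. Then for every non-empty $E\subset\{e_1,\dots,e_n\}$, $$a(E)\le\sum_{F}\mathbb{P}\Big(V_F\ge\frac{\#E}{t}\Big)\,a(E\setminus F),$$ where the sum runs over the non-empty subsets $F\subset E$ that are connected in $E$. Here $F$ is connected in $E$ if, whenever $e_i,e_j\in F$ with $i\le j$ and $k\in[i,j]$ satisfies $e_k\in E$, we have $e_k\in F$. $V_F$ denotes the largest speed of a road whose line contains every edge of $F$.
   Context: $\mathbb{T}$ is the $3$-regular tree with graph distance $d$ and root $\varnothing$, in Ulam–Harris labelling. $1_k$ is the vertex $1\cdots1$ ($k$ ones). A line is the vertex set of a bi-infinite geodesic, and $\mathbb{L}$ is the set of lines. $\mu$ is the unique automorphism-invariant Borel measure on $\mathbb{L}$ with $\mu\{\ell\ni x,y\}=2^{-d(x,y)}$ for $x\neq y$. $\Pi$ is a Poisson process on $\mathbb{L}\times(0,\infty)$ with intensity $(\beta-1)\mu\otimes v^{-\beta}\mathrm{d}v$; its atoms $(\ell,v)$ are roads with speed $v$. For an edge $e$, $V_e$ is the largest speed of a road whose line contains $e$. The maximum over an empty set of roads is taken to be $0$. *)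

theory Defs
  imports "HOL-Probability.Probability"
begin

section \<open>The 3-regular tree in Ulam--Harris labelling\<close>

definition tverts :: "nat list set" where
  "tverts = {xs. (xs \<noteq> [] \<longrightarrow> hd xs \<in> {1,2,3}) \<and> (\<forall>a\<in>set (tl xs). a \<in> {1,2})}"

definition tadj :: "nat list \<Rightarrow> nat list \<Rightarrow> bool" where
  "tadj x y \<longleftrightarrow> x \<in> tverts \<and> y \<in> tverts \<and> (\<exists>a. y = x @ [a] \<or> x = y @ [a])"

definition twalk :: "nat list list \<Rightarrow> nat list \<Rightarrow> nat list \<Rightarrow> nat \<Rightarrow> bool" where
  "twalk p x y n \<longleftrightarrow> length p = Suc n \<and> p ! 0 = x \<and> p ! n = y \<and> x \<in> tverts
     \<and> (\<forall>i<n. tadj (p ! i) (p ! Suc i))"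

definition tdist :: "nat list \<Rightarrow> nat list \<Rightarrow> nat" where
  "tdist x y = (LEAST n. \<exists>p. twalk p x y n)"

definition tlines :: "nat list set set" where
  "tlines = {range f | f :: int \<Rightarrow> nat list.
      (\<forall>i. f i \<in> tverts) \<and> (\<forall>i j. tdist (f i) (f j) = nat \<bar>i - j\<bar>)}"

definition tree_aut :: "(nat list \<Rightarrow> nat list) \<Rightarrow> bool" where
  "tree_aut \<phi> \<longleftrightarrow> bij_betw \<phi> tverts tverts \<and>
     (\<forall>x\<in>tverts. \<forall>y\<in>tverts. tadj (\<phi> x) (\<phi> y) \<longleftrightarrow> tadj x y)"

definition line_cyl :: "nat list \<Rightarrow> nat list \<Rightarrow> nat list set set" where
  "line_cyl x y = {l \<in> tlines. x \<in> l \<and> y \<in> l}"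

definition line_sets :: "nat list set set set" where
  "line_sets = sigma_sets tlines {line_cyl x y | x y. x \<in> tverts \<and> y \<in> tverts}"

definition is_line_measure :: "nat list set measure \<Rightarrow> bool" where
  "is_line_measure \<mu> \<longleftrightarrow> space \<mu> = tlines \<and> sets \<mu> = line_sets \<and>
     (\<forall>x\<in>tverts. \<forall>y\<in>tverts. x \<noteq> y \<longrightarrow>
        emeasure \<mu> (line_cyl x y) = ennreal ((1/2) ^ tdist x y)) \<and>
     (\<forall>\<phi>. tree_aut \<phi> \<longrightarrow> (\<forall>A\<in>sets \<mu>. emeasure \<mu> ((\<lambda>l. \<phi> ` l) ` A) = emeasure \<mu> A))"

definition road_intensity :: "real \<Rightarrow> nat list set measure \<Rightarrow> (nat list set \<times> real) measure" where
  "road_intensity \<beta> \<mu> = \<mu> \<Otimes>\<^sub>M density (restrict_space lborel {0<..}) (\<lambda>v. ennreal ((\<beta> - 1) * v powr (- \<beta>)))"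

definition pcount :: "'a set \<Rightarrow> 'a set \<Rightarrow> enat" where
  "pcount S A = (if finite (S \<inter> A) then enat (card (S \<inter> A)) else \<infinity>)"

definition poisson_process :: "'w measure \<Rightarrow> 'a measure \<Rightarrow> ('w \<Rightarrow> 'a set) \<Rightarrow> bool" where
  "poisson_process M \<Lambda> Roads \<longleftrightarrow> prob_space M \<and>
     (\<forall>\<omega>\<in>space M. Roads \<omega> \<subseteq> space \<Lambda>) \<and>
     (\<forall>A\<in>sets \<Lambda>. (\<lambda>\<omega>. pcount (Roads \<omega>) A) \<in> measurable M (count_space UNIV)) \<and>
     (\<forall>A\<in>sets \<Lambda>. emeasure \<Lambda> A < \<infinity> \<longrightarrow> (\<forall>k::nat.
         measure M {\<omega>\<in>space M. pcount (Roads \<omega>) A = enat k}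
           = enn2real (emeasure \<Lambda> A) ^ k / fact k * exp (- enn2real (emeasure \<Lambda> A)))) \<and>
     (\<forall>A\<in>sets \<Lambda>. emeasure \<Lambda> A = \<infinity> \<longrightarrow>
         measure M {\<omega>\<in>space M. pcount (Roads \<omega>) A = \<infinity>} = 1) \<and>
     (\<forall>I (A :: nat \<Rightarrow> 'a set). finite I \<longrightarrow> A ` I \<subseteq> sets \<Lambda> \<longrightarrow> disjoint_family_on A I \<longrightarrow>
         prob_space.indep_vars M (\<lambda>_. count_space UNIV) (\<lambda>i \<omega>. pcount (Roads \<omega>) (A i)) I)"

definition Vspeed :: "(nat list set \<times> real) set \<Rightarrow> nat list set set \<Rightarrow> ereal" where
  "Vspeed R F = Sup (insert 0 {ereal v | v l. (l, v) \<in> R \<and> (\<forall>e\<in>F. e \<subseteq> l)})"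

definition ones :: "nat \<Rightarrow> nat list" where
  "ones k = replicate k 1"

definition pedge :: "nat \<Rightarrow> nat list set" where
  "pedge k = {ones (k - 1), ones k}"

definition connected_in :: "nat list set set \<Rightarrow> nat list set set \<Rightarrow> bool" where
  "connected_in F E \<longleftrightarrow> (\<forall>i j k. pedge i \<in> F \<and> pedge j \<in> F \<and> i \<le> j \<and> i \<le> k \<and> k \<le> j
      \<and> pedge k \<in> E \<longrightarrow> pedge k \<in> F)"

definition a_prob :: "'w measure \<Rightarrow> ('w \<Rightarrow> (nat list set \<times> real) set) \<Rightarrow> real
    \<Rightarrow> nat list set set \<Rightarrow> real" where
  "a_prob M Roads t E = measure M {\<omega>\<in>space M. (\<Sum>e\<in>E. inverse (Vspeed (Roads \<omega>) {e})) \<le> ereal t}"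

end

theory Submission
  imports Defs
begin

lemma tverts_butlast: "xs @ [a] \<in> tverts \<Longrightarrow> xs \<in> tverts"
  unfolding tverts_def by (cases xs) auto

lemma nil_tverts: "[] \<in> tverts" unfolding tverts_def by auto

lemma ones_tverts: "ones k \<in> tverts"
  unfolding tverts_def ones_def by (cases k) auto

lemma tadj_sym: "tadj x y = tadj y x" unfolding tadj_def by auto

lemma twalk_snoc: "twalk p x y n \<Longrightarrow> tadj y z \<Longrightarrow> twalk (p @ [z]) x z (Suc n)"
  unfolding twalk_def
  apply (auto simp: nth_append)
  apply (metis less_Suc_eq nth_append_length)
  done

lemma twalk_cons: "twalk p x y n \<Longrightarrow> tadj x' x \<Longrightarrow> twalk (x' # p) x' y (Suc n)"
proof -
  assume w: "twalk p x y n" and a: "tadj x' x"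
  have "\<forall>i<Suc n. tadj ((x' # p) ! i) ((x' # p) ! Suc i)"
  proof (intro allI impI)
    fix i assume "i < Suc n"
    then show "tadj ((x' # p) ! i) ((x' # p) ! Suc i)"
      using w a unfolding twalk_def by (cases i) auto
  qed
  then show ?thesis using w a unfolding twalk_def tadj_def by auto
qed

lemma walk_from_nil: "y \<in> tverts \<Longrightarrow> \<exists>n p. twalk p [] y n"
proof (induction y rule: rev_induct)
  case Nil
  have "twalk [[]] [] [] 0" unfolding twalk_def using nil_tverts by auto
  then show ?case by blast
next
  case (snoc a ys)
  then have ys: "ys \<in> tverts" using tverts_butlast by blast
  then obtain n p where "twalk p [] ys n" using snoc by blast
  moreover have "tadj ys (ys @ [a])" unfolding tadj_def using ys snoc by auto
  ultimately show ?case using twalk_snoc by blast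
qed

lemma walk_exists: "x \<in> tverts \<Longrightarrow> y \<in> tverts \<Longrightarrow> \<exists>n p. twalk p x y n"
proof (induction x rule: rev_induct)
  case Nil
  then show ?case using walk_from_nil by blast
next
  case (snoc a xs)
  then have xs: "xs \<in> tverts" using tverts_butlast by blast
  then obtain n p where "twalk p xs y n" using snoc by blast
  moreover have "tadj (xs @ [a]) xs" unfolding tadj_def using xs snoc by auto
  ultimately show ?case using twalk_cons by blast
qed

lemma tdist_one_adj:
  assumes "x \<in> tverts" "y \<in> tverts" "tdist x y = 1"
  shows "tadj x y"
proof -
  have "\<exists>p. twalk p x y (tdist x y)"
    unfolding tdist_def using walk_exists[OF assms(1,2)] by (rule LeastI_ex)
  then obtain p where "twalk p x y 1" using assms by auto
  then show ?thesis unfolding twalk_def by auto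
qed

lemma discrete_ivt: "\<not> Q (g 0) \<Longrightarrow> Q (g N) \<Longrightarrow> \<exists>m<N. \<not> Q (g m) \<and> Q (g (Suc m))"
proof (induction N)
  case 0 then show ?case by simp
next
  case (Suc N)
  then show ?case by (cases "Q (g N)") (auto intro: less_SucI)
qed

lemma ones_step:
  assumes "tadj u w" "\<not> (\<exists>z. u = ones c @ z)" "\<exists>z. w = ones c @ z"
  shows "w = ones c"
proof -
  obtain x where "w = u @ [x] \<or> u = w @ [x]" using assms(1) unfolding tadj_def by auto
  then show ?thesis
  proof
    assume w: "w = u @ [x]"
    obtain z where z: "w = ones c @ z" using assms(3) by auto
    show ?thesis
    proof (cases z rule: rev_cases)
      case Nil then show ?thesis using z by simp
    next
      case (snoc z' y)
      then have "u = ones c @ z'" using w z by simp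
      then show ?thesis using assms(2) by blast
    qed
  next
    assume "u = w @ [x]" then show ?thesis using assms(2,3) by auto
  qed
qed

lemma line_convex:
  assumes l: "l \<in> tlines" and a: "ones a \<in> l" and b: "ones b \<in> l" and "a \<le> c" "c \<le> b"
  shows "ones c \<in> l"
proof (cases "a = c")
  case True then show ?thesis using a by simp
next
  case False
  then have ac: "a < c" using assms by simp
  obtain f where lf: "l = range f" and fv: "\<forall>i. f i \<in> tverts"
    and fd: "\<forall>i j. tdist (f i) (f j) = nat \<bar>i - j\<bar>"
    using l unfolding tlines_def by blast
  have adj: "tadj (f i) (f (i + 1))" for i
    using tdist_one_adj fv fd by simp
  define Q where "Q = (\<lambda>v. \<exists>z. v = ones c @ z)"
  have Qb: "Q (ones b)" unfolding Q_def ones_def using \<open>c \<le> b\<close>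
    by (metis le_add_diff_inverse replicate_add)
  have Qa: "\<not> Q (ones a)" unfolding Q_def ones_def using ac
    by (metis length_append length_replicate not_add_less1)
  obtain p q where p: "f p = ones a" and q: "f q = ones b" using a b lf by auto
  show ?thesis
  proof (cases "p \<le> q")
    case True
    define g where "g = (\<lambda>m::nat. f (p + int m))"
    have "g 0 = ones a" "g (nat (q - p)) = ones b" using p q True by (auto simp: g_def)
    then obtain m where "\<not> Q (g m)" "Q (g (Suc m))"
      using discrete_ivt[of Q g "nat (q - p)"] Qa Qb by auto
    moreover have "tadj (g m) (g (Suc m))" unfolding g_def using adj[of "p + int m"]
      by (simp add: algebra_simps)
    ultimately have "g (Suc m) = ones c" using ones_step unfolding Q_def by blast
    then show ?thesis unfolding g_def lf by (metis rangeI)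
  next
    case False
    define g where "g = (\<lambda>m::nat. f (p - int m))"
    have "g 0 = ones a" "g (nat (p - q)) = ones b" using p q False by (auto simp: g_def)
    then obtain m where "\<not> Q (g m)" "Q (g (Suc m))"
      using discrete_ivt[of Q g "nat (p - q)"] Qa Qb by auto
    moreover have "tadj (g m) (g (Suc m))" unfolding g_def using adj[of "p - int m - 1"]
      by (simp add: tadj_sym algebra_simps)
    ultimately have "g (Suc m) = ones c" using ones_step unfolding Q_def by blast
    then show ?thesis unfolding g_def lf by (metis rangeI)
  qed
qed

lemma pcount_eq0: "pcount S A = 0 \<longleftrightarrow> S \<inter> A = {}"
  unfolding pcount_def by (auto simp: zero_enat_def)

lemma pp_prob: "poisson_process M L Roads \<Longrightarrow> prob_space M"
  unfolding poisson_process_def by (elim conjE)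

lemma pp_meas: "poisson_process M L Roads \<Longrightarrow> A \<in> sets L \<Longrightarrow>
   (\<lambda>\<omega>. pcount (Roads \<omega>) A) \<in> measurable M (count_space UNIV)"
  unfolding poisson_process_def by (elim conjE) (erule bspec)

lemma pp_space: "poisson_process M L Roads \<Longrightarrow> \<omega> \<in> space M \<Longrightarrow> Roads \<omega> \<subseteq> space L"
  unfolding poisson_process_def by (elim conjE) (erule bspec)

lemma pp_indep0: "poisson_process M L Roads \<Longrightarrow> (\<forall>I (A :: nat \<Rightarrow> _ set). finite I \<longrightarrow> A ` I \<subseteq> sets L \<longrightarrow> disjoint_family_on A I \<longrightarrow>
         prob_space.indep_vars M (\<lambda>_. count_space UNIV) (\<lambda>i \<omega>. pcount (Roads \<omega>) (A i)) I)"
  unfolding poisson_process_def by (elim conjE)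

lemma pp_indep: "poisson_process M L Roads \<Longrightarrow> finite (I::nat set) \<Longrightarrow> A ` I \<subseteq> sets L \<Longrightarrow>
   disjoint_family_on A I \<Longrightarrow>
   prob_space.indep_vars M (\<lambda>_. count_space UNIV) (\<lambda>i \<omega>. pcount (Roads \<omega>) (A i)) I"
  by (rule pp_indep0[rule_format])

lemma pp_event:
  assumes "poisson_process M L Roads" "A \<in> sets L"
  shows "{\<omega>\<in>space M. pcount (Roads \<omega>) A = 0} \<in> sets M"
proof -
  have m: "(\<lambda>\<omega>. pcount (Roads \<omega>) A) \<in> measurable M (count_space UNIV)"
    using pp_meas[OF assms] .
  have "{\<omega>\<in>space M. pcount (Roads \<omega>) A = 0} = (\<lambda>\<omega>. pcount (Roads \<omega>) A) -` {0} \<inter> space M"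
    by auto
  also have "\<dots> \<in> sets M" using measurable_sets[OF m] by simp
  finally show ?thesis .
qed

lemma pp_indep_pair:
  assumes pp: "poisson_process M L Roads" and A: "A \<in> sets L" and B: "B \<in> sets L"
    and AB: "A \<inter> B = {}"
  shows "measure M ({\<omega>\<in>space M. pcount (Roads \<omega>) A = 0} \<inter> {\<omega>\<in>space M. pcount (Roads \<omega>) B = 0})
    = measure M {\<omega>\<in>space M. pcount (Roads \<omega>) A = 0} * measure M {\<omega>\<in>space M. pcount (Roads \<omega>) B = 0}"
proof -
  interpret prob_space M using pp_prob[OF pp] .
  define A' where "A' = (\<lambda>i::nat. if i = 0 then A else B)"
  have "finite {0::nat,1}" by simp
  moreover have "A' ` {0,1} \<subseteq> sets L" using A B by (auto simp: A'_def)
  moreover have "disjoint_family_on A' {0,1}" using AB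
    unfolding disjoint_family_on_def A'_def by auto
  ultimately have iv: "indep_vars (\<lambda>_. count_space UNIV) (\<lambda>i \<omega>. pcount (Roads \<omega>) (A' i)) {0,1}"
    by (rule pp_indep[OF pp])
  then have isets: "indep_sets (\<lambda>i. {(\<lambda>\<omega>. pcount (Roads \<omega>) (A' i)) -` C \<inter> space M | C. C \<in> sets (count_space UNIV)}) {0,1}"
    unfolding indep_vars_def2 by (rule conjunct2)
  define Ev where "Ev = (\<lambda>i. (\<lambda>\<omega>. pcount (Roads \<omega>) (A' i)) -` {0} \<inter> space M)"
  have "prob (\<Inter>j\<in>{0,1}. Ev j) = (\<Prod>j\<in>{0,1}. prob (Ev j))"
    proof (rule indep_setsD[OF isets])
    show "\<forall>j\<in>{0,1}. Ev j \<in> {(\<lambda>\<omega>. pcount (Roads \<omega>) (A' j)) -` C \<inter> space M | C. C \<in> sets (count_space UNIV)}"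
      unfolding Ev_def by (intro ballI CollectI exI[of _ "{0}"]) simp
  qed auto
  moreover have "Ev 0 = {\<omega>\<in>space M. pcount (Roads \<omega>) A = 0}"
    "Ev 1 = {\<omega>\<in>space M. pcount (Roads \<omega>) B = 0}" by (auto simp: Ev_def A'_def)
  ultimately show ?thesis by simp
qed

lemma pp_gen_events:
  assumes pp: "poisson_process M L Roads"
  shows "{{\<omega>\<in>space M. pcount (Roads \<omega>) A = 0} | A. A \<in> sets L \<and> P A} \<subseteq> sets M"
proof (rule subsetI)
  fix x assume "x \<in> {{\<omega>\<in>space M. pcount (Roads \<omega>) A = 0} | A. A \<in> sets L \<and> P A}"
  then obtain A where "x = {\<omega>\<in>space M. pcount (Roads \<omega>) A = 0}" "A \<in> sets L" by blast
  then show "x \<in> sets M" using pp_event[OF pp] by simp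
qed

lemma pp_gen_Int_stable:
  assumes P: "\<And>A B. P A \<Longrightarrow> P B \<Longrightarrow> P (A \<union> B)"
  shows "Int_stable {{\<omega>\<in>space M. pcount (Roads \<omega>) A = 0} | A. A \<in> sets L \<and> P A}"
  unfolding Int_stable_def
proof (intro ballI)
  fix a b assume "a \<in> {{\<omega>\<in>space M. pcount (Roads \<omega>) A = 0} | A. A \<in> sets L \<and> P A}"
    "b \<in> {{\<omega>\<in>space M. pcount (Roads \<omega>) A = 0} | A. A \<in> sets L \<and> P A}"
  then obtain A B where ab: "a = {\<omega>\<in>space M. pcount (Roads \<omega>) A = 0}" "A \<in> sets L" "P A"
    "b = {\<omega>\<in>space M. pcount (Roads \<omega>) B = 0}" "B \<in> sets L" "P B" by blast
  have un: "a \<inter> b = {\<omega>\<in>space M. pcount (Roads \<omega>) (A \<union> B) = 0}"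
    unfolding ab by (auto simp: pcount_eq0)
  show "a \<inter> b \<in> {{\<omega>\<in>space M. pcount (Roads \<omega>) A = 0} | A. A \<in> sets L \<and> P A}"
    unfolding un using ab P[of A B] by (intro CollectI exI[of _ "A \<union> B"]) auto
qed

lemma pp_indep_sigma:
  assumes pp: "poisson_process M L Roads"
  shows "prob_space.indep_set M
     (sigma_sets (space M) {{\<omega>\<in>space M. pcount (Roads \<omega>) A = 0} | A. A \<in> sets L \<and> A \<subseteq> R})
     (sigma_sets (space M) {{\<omega>\<in>space M. pcount (Roads \<omega>) A = 0} | A. A \<in> sets L \<and> A \<inter> R = {}})"
proof -
  interpret prob_space M using pp_prob[OF pp] .
  show ?thesis
  proof (rule indep_set_sigma_sets)
    show "indep_set {{\<omega>\<in>space M. pcount (Roads \<omega>) A = 0} | A. A \<in> sets L \<and> A \<subseteq> R}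
      {{\<omega>\<in>space M. pcount (Roads \<omega>) A = 0} | A. A \<in> sets L \<and> A \<inter> R = {}}"
    proof (rule indep_setI)
      show "{{\<omega>\<in>space M. pcount (Roads \<omega>) A = 0} | A. A \<in> sets L \<and> A \<subseteq> R} \<subseteq> events"
        by (rule pp_gen_events[OF pp])
      show "{{\<omega>\<in>space M. pcount (Roads \<omega>) A = 0} | A. A \<in> sets L \<and> A \<inter> R = {}} \<subseteq> events"
        by (rule pp_gen_events[OF pp])
    next
      fix a b
      assume "a \<in> {{\<omega>\<in>space M. pcount (Roads \<omega>) A = 0} | A. A \<in> sets L \<and> A \<subseteq> R}"
        "b \<in> {{\<omega>\<in>space M. pcount (Roads \<omega>) A = 0} | A. A \<in> sets L \<and> A \<inter> R = {}}"
      then obtain A B where ab: "a = {\<omega>\<in>space M. pcount (Roads \<omega>) A = 0}" "A \<in> sets L" "A \<subseteq> R"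
        "b = {\<omega>\<in>space M. pcount (Roads \<omega>) B = 0}" "B \<in> sets L" "B \<inter> R = {}" by blast
      then have "A \<inter> B = {}" by blast
      from pp_indep_pair[OF pp \<open>A \<in> sets L\<close> \<open>B \<in> sets L\<close> this]
      show "prob (a \<inter> b) = prob a * prob b" unfolding ab .
    qed
  next
    show "Int_stable {{\<omega>\<in>space M. pcount (Roads \<omega>) A = 0} | A. A \<in> sets L \<and> A \<subseteq> R}"
      by (rule pp_gen_Int_stable) auto
    show "Int_stable {{\<omega>\<in>space M. pcount (Roads \<omega>) A = 0} | A. A \<in> sets L \<and> A \<inter> R = {}}"
      by (rule pp_gen_Int_stable) auto
  qed
qed

lemma Vspeed_gt:
  assumes "r \<ge> 0"
  shows "ereal r < Vspeed R F \<longleftrightarrow> (\<exists>p\<in>R. (\<forall>e\<in>F. e \<subseteq> fst p) \<and> r < snd p)"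
proof
  assume "ereal r < Vspeed R F"
  then obtain x where x: "x \<in> insert 0 {ereal v | v l. (l, v) \<in> R \<and> (\<forall>e\<in>F. e \<subseteq> l)}" "ereal r < x"
    unfolding Vspeed_def less_Sup_iff by blast
  then show "\<exists>p\<in>R. (\<forall>e\<in>F. e \<subseteq> fst p) \<and> r < snd p" using assms by auto (metis fst_conv snd_conv)
next
  assume "\<exists>p\<in>R. (\<forall>e\<in>F. e \<subseteq> fst p) \<and> r < snd p"
  then obtain l v where "(l,v) \<in> R" "\<forall>e\<in>F. e \<subseteq> l" "r < v" by auto
  then show "ereal r < Vspeed R F" unfolding Vspeed_def less_Sup_iff by fastforce
qed

lemma Vspeed_nonneg: "0 \<le> Vspeed R F"
  unfolding Vspeed_def by (simp add: Sup_upper)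

lemma ereal_add_strict_le: "ereal b < (a::ereal) \<Longrightarrow> ereal d \<le> c \<Longrightarrow> 0 \<le> c \<Longrightarrow> ereal b + ereal d < a + c" 
  by (cases a; cases c) auto

lemma lim_thr:
  assumes s: "(s::real) > 0"
  shows "(\<forall>n::nat. ereal (s - s / (real n + 2)) < x) \<longleftrightarrow> ereal s \<le> x"
proof
  assume sx: "ereal s \<le> x"
  show "\<forall>n::nat. ereal (s - s / (real n + 2)) < x"
  proof
    fix n :: nat
    have "ereal (s - s / (real n + 2)) < ereal s" using s by simp
    then show "ereal (s - s / (real n + 2)) < x" using sx by (rule less_le_trans)
  qed
next
  assume H: "\<forall>n::nat. ereal (s - s / (real n + 2)) < x"
  show "ereal s \<le> x"
  proof (rule ccontr)
    assume "\<not> ereal s \<le> x"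
    then have xs: "x < ereal s" by simp
    have "ereal (s / 2) < x" using H[rule_format, of 0] s by (auto simp: field_simps)
    moreover have "ereal 0 < ereal (s / 2)" using s by simp
    ultimately have "ereal 0 < x" by (rule order.strict_trans[rotated])
    then obtain y where y: "x = ereal y" "y < s" using xs by (cases x) auto
    obtain n :: nat where n: "s / (s - y) < real n" using reals_Archimedean2 by blast
    have sy: "s - y > 0" using y by simp
    have "s / (s - y) < real n + 2" using n by simp
    then have "s < (real n + 2) * (s - y)" using sy by (simp add: divide_less_eq)
    then have "s / (real n + 2) < s - y" by (simp add: divide_less_eq mult.commute)
    then have "y < s - s / (real n + 2)" by simp
    moreover have "s - s / (real n + 2) < y" using H[rule_format, of n] y by simp
    ultimately show False by simp
  qed
qed

lemma exists_fast:
  fixes V :: "'a \<Rightarrow> ereal"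
  assumes fin: "finite E" and ne: "E \<noteq> {}" and t: "t > 0" and nn: "\<forall>e\<in>E. 0 \<le> V e"
    and sm: "(\<Sum>e\<in>E. inverse (V e)) \<le> ereal t"
  shows "\<exists>e\<in>E. ereal (real (card E) / t) \<le> V e"
proof (rule ccontr)
  assume "\<not> (\<exists>e\<in>E. ereal (real (card E) / t) \<le> V e)"
  then have lt: "\<forall>e\<in>E. V e < ereal (real (card E) / t)" by auto
  have cpos: "card E > 0" using fin ne by (simp add: card_gt_0_iff)
  define c where "c = t / real (card E)"
  have cp: "c > 0" using t cpos by (simp add: c_def)
  have inv: "ereal c < inverse (V e)" if e: "e \<in> E" for e
  proof (cases "V e = 0")
    case True then show ?thesis by (simp add: zero_ereal_def)
  next
    case False
    then have "0 < V e" using nn e by (simp add: order.not_eq_order_implies_strict)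
    then have "inverse (ereal (real (card E) / t)) < inverse (V e)"
      using lt e by (intro ereal_inverse_antimono_strict) auto
    moreover have "inverse (ereal (real (card E) / t)) = ereal c"
      using t cpos by (simp add: c_def)
    ultimately show ?thesis by simp
  qed
  obtain e0 where e0: "e0 \<in> E" using ne by blast
  define d where "d = real (card (E - {e0})) * c"
  have "(\<Sum>e\<in>E - {e0}. ereal c) \<le> (\<Sum>e\<in>E - {e0}. inverse (V e))"
    using inv by (intro sum_mono) (auto intro: less_imp_le)
  moreover have "(\<Sum>e\<in>E - {e0}. ereal c) = ereal d"
    by (simp add: d_def)
  ultimately have dle: "ereal d \<le> (\<Sum>e\<in>E - {e0}. inverse (V e))" by simp
  have nn2: "0 \<le> (\<Sum>e\<in>E - {e0}. inverse (V e))"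
    using nn by (intro sum_nonneg) (auto simp: ereal_inverse_nonneg_iff)
  have "ereal c + ereal d < inverse (V e0) + (\<Sum>e\<in>E - {e0}. inverse (V e))"
    by (rule ereal_add_strict_le[OF inv[OF e0] dle nn2])
  also have "\<dots> = (\<Sum>e\<in>E. inverse (V e))"
    using fin e0 by (simp add: sum.remove)
  also have "\<dots> \<le> ereal t" by (rule sm)
  finally have "c + d < t" by simp
  moreover have "c + d = t"
  proof -
    have h: "1 + real (card (E - {e0})) = real (card E)" using fin e0 cpos
      by (simp add: of_nat_diff)
    have "c + d = c * (1 + real (card (E - {e0})))" by (simp add: d_def algebra_simps)
    also have "\<dots> = real (card E) * c" using h by simp
    finally have "c + d = real (card E) * c" .
    then show ?thesis using cpos by (simp add: c_def)
  qed
  ultimately show False by simp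
qed

lemma trace_connected:
  assumes l: "l \<in> tlines"
  shows "connected_in {e\<in>E. e \<subseteq> l} E"
  unfolding connected_in_def
proof (intro allI impI, elim conjE)
  fix i j k
  assume i: "pedge i \<in> {e\<in>E. e \<subseteq> l}" and j: "pedge j \<in> {e\<in>E. e \<subseteq> l}"
    and ij: "i \<le> j" "i \<le> k" "k \<le> j" and k: "pedge k \<in> E"
  have a: "ones (i - 1) \<in> l" using i by (auto simp: pedge_def)
  have b: "ones j \<in> l" using j by (auto simp: pedge_def)
  have "ones (k - 1) \<in> l" by (rule line_convex[OF l a b]) (use ij in auto)
  moreover have "ones k \<in> l" by (rule line_convex[OF l a b]) (use ij in auto)
  ultimately show "pedge k \<in> {e\<in>E. e \<subseteq> l}" using k by (auto simp: pedge_def)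
qed

lemma ri_space: "space (road_intensity \<beta> \<mu>) = space \<mu> \<times> {0<..}"
  by (simp add: road_intensity_def space_pair_measure space_restrict_space)

lemma ri_rect:
  assumes L: "L \<in> sets \<mu>"
  shows "{p \<in> space (road_intensity \<beta> \<mu>). fst p \<in> L \<and> r < snd p} \<in> sets (road_intensity \<beta> \<mu>)"
proof -
  have "L \<subseteq> space \<mu>" using sets.sets_into_space[OF L] .
  then have eq: "{p \<in> space (road_intensity \<beta> \<mu>). fst p \<in> L \<and> r < snd p} = L \<times> ({0<..} \<inter> {r<..})"
    by (auto simp: ri_space)
  have "{0<..} \<inter> {r<..} \<in> sets (restrict_space lborel ({0<..}::real set))"
    by (subst sets_restrict_space_iff) auto
  then have "L \<times> ({0<..} \<inter> {r<..}) \<in> sets (road_intensity \<beta> \<mu>)"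
    unfolding road_intensity_def using L by (intro pair_measureI) auto
  then show ?thesis using eq by simp
qed

lemma lm_space: "is_line_measure \<mu> \<Longrightarrow> space \<mu> = tlines"
  unfolding is_line_measure_def by (elim conjE)

lemma lm_sets: "is_line_measure \<mu> \<Longrightarrow> sets \<mu> = line_sets"
  unfolding is_line_measure_def by (elim conjE)

lemma cyl_sets:
  assumes "is_line_measure \<mu>"
  shows "{l \<in> space \<mu>. pedge k \<subseteq> l} \<in> sets \<mu>"
proof -
  have "{l \<in> space \<mu>. pedge k \<subseteq> l} = line_cyl (ones (k - 1)) (ones k)"
    using lm_space[OF assms] by (auto simp: line_cyl_def pedge_def)
  also have "\<dots> \<in> line_sets" unfolding line_sets_def
    using ones_tverts by (intro sigma_sets.Basic) blast
  finally show ?thesis using lm_sets[OF assms] by simp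
qed

lemma cylF_sets:
  assumes "is_line_measure \<mu>" "finite F" "F \<subseteq> range pedge"
  shows "{l \<in> space \<mu>. \<forall>e\<in>F. e \<subseteq> l} \<in> sets \<mu>"
proof (rule sets.sets_Collect_finite_All)
  fix e assume "e \<in> F"
  then obtain k where "e = pedge k" using assms by blast
  then show "{l \<in> space \<mu>. e \<subseteq> l} \<in> sets \<mu>" using cyl_sets[OF assms(1)] by simp
qed (rule assms(2))

lemma TL_sets:
  assumes "is_line_measure \<mu>" "finite E" "E \<subseteq> range pedge"
  shows "{l \<in> space \<mu>. \<forall>e\<in>E. (e \<subseteq> l) = (e \<in> F)} \<in> sets \<mu>"
proof (rule sets.sets_Collect_finite_All)
  fix e assume "e \<in> E"
  then obtain k where k: "e = pedge k" using assms by blast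
  show "{l \<in> space \<mu>. (e \<subseteq> l) = (e \<in> F)} \<in> sets \<mu>"
  proof (cases "e \<in> F")
    case True then show ?thesis using cyl_sets[OF assms(1)] k by simp
  next
    case False
    then have "{l \<in> space \<mu>. (e \<subseteq> l) = (e \<in> F)} = space \<mu> - {l \<in> space \<mu>. pedge k \<subseteq> l}"
      using k by auto
    then show ?thesis using cyl_sets[OF assms(1)] by simp
  qed
qed (rule assms(2))

theorem mainTheorem10:
  fixes \<beta> t :: real and n :: nat
    and \<mu> :: "nat list set measure"
    and M :: "'w measure" and Roads :: "'w \<Rightarrow> (nat list set \<times> real) set"
    and E :: "nat list set set"
  assumes "\<beta> > 1" and "n \<ge> 1" and "t > 0"
    and "is_line_measure \<mu>"
    and "poisson_process M (road_intensity \<beta> \<mu>) Roads"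
    and "E \<subseteq> pedge ` {1..n}" and "E \<noteq> {}"
  shows "a_prob M Roads t E \<le>
    (\<Sum>F\<in>{F. F \<subseteq> E \<and> F \<noteq> {} \<and> connected_in F E}.
       measure M {\<omega>\<in>space M. Vspeed (Roads \<omega>) F \<ge> ereal (real (card E) / t)}
         * a_prob M Roads t (E - F))"
proof -
  note pp = assms(5)
  note lmu = assms(4)
  let ?L = "road_intensity \<beta> \<mu>"
  interpret prob_space M by (rule pp_prob[OF pp])
  have finE: "finite E" using assms(6) by (rule finite_subset) simp
  have Erng: "E \<subseteq> range pedge" using assms(6) by auto
  have cpos: "card E > 0" using finE assms(7) by (simp add: card_gt_0_iff)
  define s where "s = real (card E) / t"
  have spos: "s > 0" using cpos assms(3) by (simp add: s_def)
  define FS where "FS = {F. F \<subseteq> E \<and> F \<noteq> {} \<and> connected_in F E}"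
  have finFS: "finite FS"
  proof (rule finite_subset)
    show "FS \<subseteq> Pow E" unfolding FS_def by auto
  qed (use finE in simp)
  define AP where "AP = (\<lambda>F. {\<omega>\<in>space M. (\<Sum>e\<in>E - F. inverse (Vspeed (Roads \<omega>) {e})) \<le> ereal t})"
  define TL where "TL = (\<lambda>F. {l\<in>space \<mu>. \<forall>e\<in>E. (e \<subseteq> l) = (e \<in> F)})"
  define CA where "CA = (\<lambda>F r. {p\<in>space ?L. fst p \<in> TL F \<and> r < snd p})"
  define C where "C = (\<lambda>F r. space M - {\<omega>\<in>space M. pcount (Roads \<omega>) (CA F r) = 0})"
  define DA where "DA = (\<lambda>F r. {p\<in>space ?L. fst p \<in> {l\<in>space \<mu>. \<forall>e\<in>F. e \<subseteq> l} \<and> r < snd p})"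
  define D where "D = (\<lambda>F r. {\<omega>\<in>space M. ereal r < Vspeed (Roads \<omega>) F})"
  have TLs: "TL F \<in> sets \<mu>" for F unfolding TL_def by (rule TL_sets[OF lmu finE Erng])
  have CAs: "CA F r \<in> sets ?L" for F r unfolding CA_def by (rule ri_rect[OF TLs])
  have DAs: "DA F r \<in> sets ?L" if "F \<subseteq> E" for F r
    unfolding DA_def using that finE Erng
    by (intro ri_rect cylF_sets[OF lmu]) (auto intro: finite_subset)
  have D_eq: "D F r = space M - {\<omega>\<in>space M. pcount (Roads \<omega>) (DA F r) = 0}" if r: "r \<ge> 0" for F r
  proof (rule set_eqI)
    fix \<omega>
    show "\<omega> \<in> D F r \<longleftrightarrow> \<omega> \<in> space M - {\<omega>\<in>space M. pcount (Roads \<omega>) (DA F r) = 0}"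
    proof (cases "\<omega> \<in> space M")
      case True
      have sub: "Roads \<omega> \<subseteq> space ?L" by (rule pp_space[OF pp True])
      have "\<omega> \<in> D F r \<longleftrightarrow> (\<exists>p\<in>Roads \<omega>. (\<forall>e\<in>F. e \<subseteq> fst p) \<and> r < snd p)"
        using True Vspeed_gt[OF r] by (simp add: D_def)
      also have "\<dots> \<longleftrightarrow> Roads \<omega> \<inter> DA F r \<noteq> {}"
      proof
        assume "\<exists>p\<in>Roads \<omega>. (\<forall>e\<in>F. e \<subseteq> fst p) \<and> r < snd p"
        then obtain p where p: "p \<in> Roads \<omega>" "\<forall>e\<in>F. e \<subseteq> fst p" "r < snd p" by blast
        then have "p \<in> space ?L" using sub by blast
        then have "p \<in> DA F r" using p unfolding DA_def ri_space by (auto simp: mem_Times_iff)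
        then show "Roads \<omega> \<inter> DA F r \<noteq> {}" using p(1) by blast
      next
        assume "Roads \<omega> \<inter> DA F r \<noteq> {}"
        then obtain p where "p \<in> Roads \<omega>" "p \<in> DA F r" by blast
        then show "\<exists>p\<in>Roads \<omega>. (\<forall>e\<in>F. e \<subseteq> fst p) \<and> r < snd p" unfolding DA_def by blast
      qed
      finally show ?thesis using True by (simp add: pcount_eq0)
    next
      case False then show ?thesis by (simp add: D_def)
    qed
  qed
  have Ds: "D F r \<in> events" if "F \<subseteq> E" "r \<ge> 0" for F r
    using D_eq[OF that(2)] pp_event[OF pp DAs[OF that(1)]] by simp
  have Cs: "C F r \<in> events" for F r
    unfolding C_def using pp_event[OF pp CAs] by simp
  have CD: "C F r \<subseteq> D F r" if "F \<subseteq> E" "r \<ge> 0" for F r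
  proof
    fix \<omega> assume w: "\<omega> \<in> C F r"
    then have wM: "\<omega> \<in> space M" by (simp add: C_def)
    from w obtain p where p: "p \<in> Roads \<omega>" "p \<in> CA F r" by (auto simp: C_def pcount_eq0)
    then have "\<forall>e\<in>F. e \<subseteq> fst p" "r < snd p" using that(1) by (auto simp: CA_def TL_def)
    then show "\<omega> \<in> D F r" using wM p Vspeed_gt[OF that(2)] by (auto simp: D_def)
  qed
  have APsig: "AP F \<in> sigma_sets (space M) {{\<omega>\<in>space M. pcount (Roads \<omega>) A = 0} | A. A \<in> sets ?L \<and> A \<inter> {p\<in>space ?L. fst p \<in> TL F} = {}}"
    if FE: "F \<subseteq> E" for F
  proof -
    define R where "R = {p\<in>space ?L. fst p \<in> TL F}"
    define G2 where "G2 = {{\<omega>\<in>space M. pcount (Roads \<omega>) A = 0} | A. A \<in> sets ?L \<and> A \<inter> R = {}}"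
    define N where "N = sigma (space M) G2"
    have G2sub: "G2 \<subseteq> Pow (space M)" unfolding G2_def by auto
    have spN: "space N = space M" unfolding N_def using G2sub by simp
    have setsN: "sets N = sigma_sets (space M) G2" unfolding N_def using G2sub by simp
    have Vm: "(\<lambda>\<omega>. Vspeed (Roads \<omega>) {e}) \<in> borel_measurable N" if e: "e \<in> E - F" for e
    proof (rule borel_measurableI_greater)
      fix y :: ereal
      show "{\<omega>\<in>space N. y < Vspeed (Roads \<omega>) {e}} \<in> sets N"
      proof (cases y)
        case (real r')
        show ?thesis
        proof (cases "r' < 0")
          case True
          have "y < Vspeed (Roads \<omega>) {e}" for \<omega>
          proof -
            have "y < 0" using True real by simp
            then show ?thesis using Vspeed_nonneg[of "Roads \<omega>" "{e}"] by (rule less_le_trans)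
          qed
          then have "{\<omega>\<in>space N. y < Vspeed (Roads \<omega>) {e}} = space N" by auto
          then show ?thesis by simp
        next
          case False
          then have r0: "r' \<ge> 0" by simp
          have eE: "{e} \<subseteq> E" using e by simp
          have "DA {e} r' \<inter> R = {}" using e by (auto simp: DA_def R_def TL_def)
          then have "{\<omega>\<in>space M. pcount (Roads \<omega>) (DA {e} r') = 0} \<in> G2"
            unfolding G2_def using DAs[OF eE, of r'] by blast
          then have "D {e} r' \<in> sigma_sets (space M) G2"
            unfolding D_eq[OF r0] by (intro sigma_sets.Compl sigma_sets.Basic)
          moreover have "{\<omega>\<in>space N. y < Vspeed (Roads \<omega>) {e}} = D {e} r'"
            using spN real by (simp add: D_def)
          ultimately show ?thesis using setsN by simp
        qed
      next
        case PInf
        have eq: "{\<omega>\<in>space N. y < Vspeed (Roads \<omega>) {e}} = {}" using PInf by auto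
        show ?thesis unfolding eq by (rule sets.empty_sets)
      next
        case MInf
        have "y < Vspeed (Roads \<omega>) {e}" for \<omega>
        proof -
          have "y < 0" using MInf by simp
          then show ?thesis using Vspeed_nonneg[of "Roads \<omega>" "{e}"] by (rule less_le_trans)
        qed
        then have "{\<omega>\<in>space N. y < Vspeed (Roads \<omega>) {e}} = space N" by auto
        then show ?thesis by simp
      qed
    qed
    have fm[measurable]: "(\<lambda>\<omega>. \<Sum>e\<in>E - F. inverse (Vspeed (Roads \<omega>) {e})) \<in> borel_measurable N"
      by (intro borel_measurable_ereal_sum borel_measurable_ereal_inverse Vm)
    have "{\<omega>\<in>space N. (\<Sum>e\<in>E - F. inverse (Vspeed (Roads \<omega>) {e})) \<le> ereal t} \<in> sets N"
      by measurable
    then show ?thesis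
      using spN setsN by (simp add: AP_def G2_def R_def)
  qed
  have indep: "prob (C F r \<inter> AP F) = prob (C F r) * prob (AP F)" if FE: "F \<subseteq> E" for F r
  proof -
    define R where "R = {p\<in>space ?L. fst p \<in> TL F}"
    define G1 where "G1 = {{\<omega>\<in>space M. pcount (Roads \<omega>) A = 0} | A. A \<in> sets ?L \<and> A \<subseteq> R}"
    define G2 where "G2 = {{\<omega>\<in>space M. pcount (Roads \<omega>) A = 0} | A. A \<in> sets ?L \<and> A \<inter> R = {}}"
    have ind: "indep_set (sigma_sets (space M) G1) (sigma_sets (space M) G2)"
      unfolding G1_def G2_def by (rule pp_indep_sigma[OF pp])
    have "{\<omega>\<in>space M. pcount (Roads \<omega>) (CA F r) = 0} \<in> G1"
      unfolding G1_def using CAs[of F r] by (auto simp: CA_def R_def)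
    then have Csig: "C F r \<in> sigma_sets (space M) G1"
      unfolding C_def by (intro sigma_sets.Compl sigma_sets.Basic)
    have APsig': "AP F \<in> sigma_sets (space M) G2" unfolding G2_def R_def by (rule APsig[OF FE])
    show ?thesis by (rule indep_setD[OF ind Csig APsig'])
  qed
  have APs: "AP F \<in> events" if "F \<subseteq> E" for F
  proof -
    have "sigma_sets (space M) {{\<omega>\<in>space M. pcount (Roads \<omega>) A = 0} | A. A \<in> sets ?L \<and> A \<inter> {p\<in>space ?L. fst p \<in> TL F} = {}} \<subseteq> events"
      by (rule sets.sigma_sets_subset) (rule pp_gen_events[OF pp])
    then show ?thesis using APsig[OF that] by blast
  qed
  have incl: "{\<omega>\<in>space M. (\<Sum>e\<in>E. inverse (Vspeed (Roads \<omega>) {e})) \<le> ereal t} \<subseteq> (\<Union>F\<in>FS. C F r \<inter> AP F)"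
    if r: "0 \<le> r" "r < s" for r
  proof
    fix \<omega> assume "\<omega> \<in> {\<omega>\<in>space M. (\<Sum>e\<in>E. inverse (Vspeed (Roads \<omega>) {e})) \<le> ereal t}"
    then have wM: "\<omega> \<in> space M" and sm: "(\<Sum>e\<in>E. inverse (Vspeed (Roads \<omega>) {e})) \<le> ereal t" by auto
    have nn: "\<forall>e\<in>E. 0 \<le> Vspeed (Roads \<omega>) {e}" using Vspeed_nonneg by blast
    have "\<exists>e\<in>E. ereal (real (card E) / t) \<le> Vspeed (Roads \<omega>) {e}"
      by (rule exists_fast[of E t "\<lambda>e. Vspeed (Roads \<omega>) {e}", OF finE assms(7) assms(3) nn sm])
    then obtain e where e: "e \<in> E" "ereal s \<le> Vspeed (Roads \<omega>) {e}"
      unfolding s_def by blast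
    have "ereal r < ereal s" using r by simp
    then have "ereal r < Vspeed (Roads \<omega>) {e}" using e(2) by (rule less_le_trans)
    then have "\<exists>p\<in>Roads \<omega>. (\<forall>e'\<in>{e}. e' \<subseteq> fst p) \<and> r < snd p"
      using Vspeed_gt[OF r(1), of "Roads \<omega>" "{e}"] by simp
    then obtain p where p: "p \<in> Roads \<omega>" "e \<subseteq> fst p" "r < snd p" by blast
    have pL: "p \<in> space ?L" using pp_space[OF pp wM] p(1) by blast
    then have lt: "fst p \<in> tlines" using lm_space[OF lmu] by (auto simp: ri_space)
    define F where "F = {e'\<in>E. e' \<subseteq> fst p}"
    have FS: "F \<in> FS" unfolding FS_def F_def using e p trace_connected[OF lt] by auto
    have "p \<in> CA F r" using pL p lt lm_space[OF lmu] by (auto simp: CA_def TL_def F_def ri_space)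
    then have wC: "\<omega> \<in> C F r" using wM p(1) by (auto simp: C_def pcount_eq0)
    have "(\<Sum>e\<in>E - F. inverse (Vspeed (Roads \<omega>) {e})) \<le> (\<Sum>e\<in>E. inverse (Vspeed (Roads \<omega>) {e}))"
      using finE Vspeed_nonneg by (intro sum_mono2) (auto simp: ereal_inverse_nonneg_iff)
    then have "\<omega> \<in> AP F" using sm wM unfolding AP_def by (auto intro: order.trans)
    then show "\<omega> \<in> (\<Union>F\<in>FS. C F r \<inter> AP F)" using FS wC by blast
  qed
  have FSE: "F \<subseteq> E" if "F \<in> FS" for F using that by (simp add: FS_def)
  have step: "a_prob M Roads t E \<le> (\<Sum>F\<in>FS. prob (D F r) * prob (AP F))" if r: "0 \<le> r" "r < s" for r
  proof -
    have Us: "(\<Union>F\<in>FS. C F r \<inter> AP F) \<in> events"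
      using finFS Cs APs FSE by (intro sets.finite_UN) auto
    have "a_prob M Roads t E \<le> prob (\<Union>F\<in>FS. C F r \<inter> AP F)"
      unfolding a_prob_def by (rule finite_measure_mono[OF incl[OF r] Us])
    also have "\<dots> \<le> (\<Sum>F\<in>FS. prob (C F r \<inter> AP F))"
      using finFS Cs APs FSE by (intro measure_subadditive_finite) auto
    also have "\<dots> = (\<Sum>F\<in>FS. prob (C F r) * prob (AP F))"
      using indep FSE by (intro sum.cong) auto
    also have "\<dots> \<le> (\<Sum>F\<in>FS. prob (D F r) * prob (AP F))"
      using CD FSE Ds r by (intro sum_mono mult_right_mono finite_measure_mono) auto
    finally show ?thesis .
  qed
  define rr where "rr = (\<lambda>n::nat. s - s / (real n + 2))"
  have rr0: "0 \<le> rr n" "rr n < s" for n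
  proof -
    have "s / (real n + 2) \<le> s / 1" by (rule frac_le) (use spos in auto)
    then show "0 \<le> rr n" by (simp add: rr_def)
    show "rr n < s" using spos by (simp add: rr_def)
  qed
  have lim: "(\<lambda>n. prob (D F (rr n))) \<longlonglongrightarrow> prob {\<omega>\<in>space M. ereal s \<le> Vspeed (Roads \<omega>) F}"
    if F: "F \<in> FS" for F
  proof -
    have "(\<lambda>n. prob (D F (rr n))) \<longlonglongrightarrow> prob (\<Inter>n. D F (rr n))"
    proof (rule finite_Lim_measure_decseq)
      show "range (\<lambda>n. D F (rr n)) \<subseteq> events" using Ds rr0 FSE[OF F] by auto
      show "decseq (\<lambda>n. D F (rr n))"
      proof (rule decseq_SucI)
        fix n
        have "s / (real (Suc n) + 2) \<le> s / (real n + 2)" by (rule frac_le) (use spos in auto)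
        then have le: "ereal (rr n) \<le> ereal (rr (Suc n))" by (simp add: rr_def)
        show "D F (rr (Suc n)) \<subseteq> D F (rr n)"
        proof
          fix x assume "x \<in> D F (rr (Suc n))"
          then have x: "x \<in> space M" "ereal (rr (Suc n)) < Vspeed (Roads x) F" by (auto simp: D_def)
          have "ereal (rr n) < Vspeed (Roads x) F" using le x(2) by (rule le_less_trans)
          then show "x \<in> D F (rr n)" using x(1) by (simp add: D_def)
        qed
      qed
    qed
    moreover have "(\<Inter>n. D F (rr n)) = {\<omega>\<in>space M. \<forall>n. ereal (rr n) < Vspeed (Roads \<omega>) F}"
      by (auto simp: D_def)
    moreover have "\<dots> = {\<omega>\<in>space M. ereal s \<le> Vspeed (Roads \<omega>) F}"
      using lim_thr[OF spos] unfolding rr_def by simp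
    ultimately show ?thesis by simp
  qed
  have "(\<lambda>n. \<Sum>F\<in>FS. prob (D F (rr n)) * prob (AP F))
     \<longlonglongrightarrow> (\<Sum>F\<in>FS. prob {\<omega>\<in>space M. ereal s \<le> Vspeed (Roads \<omega>) F} * prob (AP F))"
    using lim by (intro tendsto_sum tendsto_mult_right) auto
  then have "a_prob M Roads t E \<le> (\<Sum>F\<in>FS. prob {\<omega>\<in>space M. ereal s \<le> Vspeed (Roads \<omega>) F} * prob (AP F))"
    by (rule LIMSEQ_le_const) (use step rr0 in auto)
  then show ?thesis unfolding FS_def s_def AP_def a_prob_def .
qed

end
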